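(* Let $A$ be a real $2\times 2$ matrix and $B$ a real $1\times 2$ matrix, and let $\mathrm{NT}=\{\vec{x}\in\mathbb{R}^2 : BA^k\vec{x}>0 \text{ for all integers } k\ge 0\}$. Suppose $A$ has a positive eigenvalue $\lambda_1$ and a negative eigenvalue $\lambda_2$ with $\lambda_1<|\lambda_2|$, and eigenvectors $\vec{\beta}_1,\vec{\beta}_2$ for $\lambda_1,\lambda_2$ respectively, with $B\vec{\beta}_1>0$ and $B\vec{\beta}_2>0$. Then $\mathrm{NT}=\{k\vec{\beta}_1: k>0\}$.
   Context: $\mathrm{NT}$ is the non-termination set of the loop "while $(B\vec{x}>0)$ $\{\vec{x}:=A\vec{x}\}$". *)

theory Defs
  imports "HOL-Analysis.Analysis"
begin

text \<open>Non-termination set of the loop  while (B x > 0) { x := A x }.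
  B is a real 1x2 matrix, represented as its single row b (so B x = b \<bullet> x);
  A^k is the k-th matrix power.\<close>
primrec matpow :: "real^2^2 \<Rightarrow> nat \<Rightarrow> real^2^2" where
  "matpow A 0 = mat 1"
| "matpow A (Suc k) = A ** matpow A k"

definition NT :: "real^2^2 \<Rightarrow> real^2 \<Rightarrow> (real^2) set" where
  "NT A b = {x. \<forall>k::nat. b \<bullet> ((matpow A k) *v x) > 0}"

end

theory Submission
  imports Defs
begin

lemma matpow_eig: "A *v v = l *\<^sub>R v \<Longrightarrow> matpow A k *v v = (l ^ k) *\<^sub>R v"
proof (induction k)
  case 0 then show ?case by simp
next
  case (Suc k)
  have "matpow A (Suc k) *v v = A *v (matpow A k *v v)"
    by (simp add: matrix_vector_mul_assoc)
  also have "\<dots> = (l ^ k) *\<^sub>R (A *v v)" using Suc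
    by (simp add: matrix_vector_mult_scaleR)
  also have "\<dots> = (l ^ Suc k) *\<^sub>R v" using Suc.prems by simp
  finally show ?case .
qed

lemma dominate:
  fixes l1 l2 p q a c :: real
  assumes "l1 > 0" "l2 < 0" "l1 < \<bar>l2\<bar>" "p > 0" "q > 0" "c \<noteq> 0"
  shows "\<exists>k. a * l1 ^ k * p + c * l2 ^ k * q \<le> 0"
proof -
  define r where "r = \<bar>l2\<bar> / l1"
  have r1: "1 < r" unfolding r_def using assms(3) by (simp only: less_divide_eq_1_pos[OF assms(1)])
  obtain n where n: "\<bar>a\<bar> * p / (\<bar>c\<bar> * q) < r ^ n" using real_arch_pow[OF r1] by blast
  have big: "\<bar>a\<bar> * p * l1 ^ k < \<bar>c\<bar> * q * \<bar>l2\<bar> ^ k" if "k \<ge> n" for k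
  proof -
    have "r ^ n \<le> r ^ k" using r1 that by (simp add: power_increasing)
    with n have "\<bar>a\<bar> * p / (\<bar>c\<bar> * q) < r ^ k" by linarith
    hence "\<bar>a\<bar> * p < r ^ k * (\<bar>c\<bar> * q)" using assms by (simp add: divide_less_eq)
    also have "r ^ k = \<bar>l2\<bar> ^ k / l1 ^ k" by (simp add: r_def power_divide)
    finally have "\<bar>a\<bar> * p < \<bar>l2\<bar> ^ k / l1 ^ k * (\<bar>c\<bar> * q)" .
    hence "\<bar>a\<bar> * p * l1 ^ k < \<bar>l2\<bar> ^ k * (\<bar>c\<bar> * q)"
      using assms by (simp add: field_simps)
    thus ?thesis by (simp add: algebra_simps)
  qed
  have "\<exists>k\<ge>n. c * l2 ^ k < 0"
  proof (cases "c * l2 ^ n < 0")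
    case True then show ?thesis by auto
  next
    case False
    have "c * l2 ^ n \<noteq> 0" using assms by simp
    with False have "c * l2 ^ n > 0" by linarith
    hence "l2 * (c * l2 ^ n) < 0" by (rule mult_neg_pos[OF assms(2)])
    moreover have "c * l2 ^ Suc n = l2 * (c * l2 ^ n)" by simp
    ultimately have "c * l2 ^ Suc n < 0" by (simp only:)
    then show ?thesis by (intro exI[of _ "Suc n"]) auto
  qed
  then obtain k where k: "k \<ge> n" "c * l2 ^ k < 0" by blast
  have "a * l1 ^ k * p \<le> \<bar>a\<bar> * p * l1 ^ k"
  proof -
    have "a * l1 ^ k * p = a * (p * l1 ^ k)" by simp
    also have "\<dots> \<le> \<bar>a\<bar> * (p * l1 ^ k)"
      using assms by (intro mult_right_mono) auto
    finally show ?thesis by simp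
  qed
  moreover have "c * l2 ^ k * q = - (\<bar>c\<bar> * q * \<bar>l2\<bar> ^ k)"
  proof -
    have "\<bar>c * l2 ^ k\<bar> = \<bar>c\<bar> * \<bar>l2\<bar> ^ k" by (simp add: abs_mult power_abs)
    with k(2) have "c * l2 ^ k = - (\<bar>c\<bar> * \<bar>l2\<bar> ^ k)" by linarith
    thus ?thesis by (metis minus_mult_left mult.commute mult.left_commute)
  qed
  ultimately have "a * l1 ^ k * p + c * l2 ^ k * q < 0" using big[OF k(1)] by linarith
  thus ?thesis by (intro exI[of _ k]) (rule less_imp_le)
qed

theorem lemma10:
  fixes A :: "real^2^2" and b :: "real^2" and l1 l2 :: real and v1 v2 :: "real^2"
  assumes "l1 > 0" and "l2 < 0" and "l1 < \<bar>l2\<bar>"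
    and "v1 \<noteq> 0" and "A *v v1 = l1 *\<^sub>R v1"
    and "v2 \<noteq> 0" and "A *v v2 = l2 *\<^sub>R v2"
    and "b \<bullet> v1 > 0" and "b \<bullet> v2 > 0"
  shows "NT A b = {c *\<^sub>R v1 | c. c > 0}"
proof -
  have nsp: "v2 \<notin> span {v1}"
  proof
    assume "v2 \<in> span {v1}"
    then obtain t where t: "v2 = t *\<^sub>R v1" by (auto simp: span_singleton)
    have "A *v v2 = t *\<^sub>R (A *v v1)" by (simp add: t matrix_vector_mult_scaleR)
    also have "\<dots> = l1 *\<^sub>R v2" using assms(5) t by simp
    finally have eq: "l2 *\<^sub>R v2 = l1 *\<^sub>R v2" unfolding assms(7) .
    have "(l1 - l2) *\<^sub>R v2 = l1 *\<^sub>R v2 - l2 *\<^sub>R v2" by (rule scaleR_left_diff_distrib)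
    also have "\<dots> = 0" by (simp only: eq diff_self)
    finally have "(l1 - l2) *\<^sub>R v2 = 0" .
    thus False using assms by simp
  qed
  have ne: "v1 \<noteq> v2" using nsp span_base by fastforce
  have ind: "independent {v2, v1}"
    using nsp assms(4) by (simp add: independent_insert ne[symmetric])
  have "UNIV \<subseteq> span {v2, v1}"
    using card_eq_dim[of "{v2,v1}" UNIV] ind ne by simp
  hence rep: "\<exists>a c. x = a *\<^sub>R v1 + c *\<^sub>R v2" for x
  proof -
    assume "UNIV \<subseteq> span {v2, v1}"
    hence "x \<in> span (insert v2 {v1})" by blast
    then obtain k where "x - k *\<^sub>R v2 \<in> span {v1}" unfolding span_insert by blast
    then obtain t where "x - k *\<^sub>R v2 = t *\<^sub>R v1" unfolding span_singleton by blast
    hence "x = t *\<^sub>R v1 + k *\<^sub>R v2" by (metis diff_add_cancel)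
    thus ?thesis by blast
  qed
  have val: "b \<bullet> (matpow A k *v (a *\<^sub>R v1 + c *\<^sub>R v2)) = a * l1 ^ k * (b \<bullet> v1) + c * l2 ^ k * (b \<bullet> v2)" for k a c
    by (simp add: matrix_vector_right_distrib matrix_vector_mult_scaleR
        matpow_eig[OF assms(5)] matpow_eig[OF assms(7)] inner_add_right)
  show ?thesis
  proof (intro set_eqI iffI)
    fix x assume "x \<in> NT A b"
    hence pos: "\<And>k. b \<bullet> (matpow A k *v x) > 0" by (simp add: NT_def)
    obtain a c where x: "x = a *\<^sub>R v1 + c *\<^sub>R v2" using rep by blast
    have "c = 0"
    proof (rule ccontr)
      assume "c \<noteq> 0"
      from dominate[OF assms(1-3,8,9) this, of a] obtain k where
        "a * l1 ^ k * (b \<bullet> v1) + c * l2 ^ k * (b \<bullet> v2) \<le> 0" by blast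
      with pos[of k] show False by (simp add: x val)
    qed
    moreover have "a > 0" using pos[of 0] assms(8) \<open>c = 0\<close>
      by (simp add: x val zero_less_mult_iff)
    ultimately show "x \<in> {c *\<^sub>R v1 | c. c > 0}" using x by auto
  next
    fix x assume "x \<in> {c *\<^sub>R v1 | c. c > 0}"
    then obtain a where a: "a > 0" "x = a *\<^sub>R v1" by auto
    have "b \<bullet> (matpow A k *v x) > 0" for k
      using val[of k a 0] a assms by simp
    thus "x \<in> NT A b" by (simp add: NT_def)
  qed
qed

end
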